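(* (1) Soundness: if $\Phi;\Gamma\vdash_I t:\rho$ holds for a template type $\rho$, then $\Gamma\xi\vdash_J t:\rho\xi$ holds for every model $(J,\xi)$ of $\Phi$. (2) Completeness: if $\Gamma\vdash_J t:\rho$ holds for a context $\Gamma$ and a type $\rho$ (without second-order variables), then there exist a template type $\tau$ and a second-order substitution $\xi$ with $\tau\xi=\rho$ such that $\Phi;\Gamma\vdash_I t:\tau$ is derivable for some SOCP $\Phi$, and $(J,\xi)$ is a model of $\Phi$.
   Context: Simply typed terms over variables, function symbols $\mathcal F$, constructors $\mathcal C$: variables, symbols, applications $t\,u$, pairs $(t,u)$, $\mathsf{let}\ (x,y)=t\ \mathsf{in}\ u$. Second-order index terms $a::=i\mid\alpha\mid g(a_1,\dots,a_k)$ over index variables $i$, second-order variables $\alpha$, index symbols $g$ (including $0,\mathsf s,+$). An interpretation $J$ maps $k$-ary symbols to total weakly monotone functions $\mathbb N^k\to\mathbb N$ ($0,\mathsf s,+$ standard); $a\le_J b$ iff $[a]^\beta_J\le[b]^\beta_J$ for all assignments. An SOCP is a set of inequalities $a\le b$ and occurrence constraints $i\notin\alpha$; a second-order substitution $\xi$ maps second-order variables to index terms without second-order variables; $(J,\xi)$ is a model of $\Phi$ if $a\xi\le_J b\xi$ for all inequalities and $i\notin\mathrm{Var}(\xi(\alpha))$ for all occurrence constraints. Sized types: monotypes $\rho::=B^a\mid\rho_1\times\rho_2\mid\sigma\to\rho$; polytypes $\forall\vec i.\,\sigma\to\rho$; types $\sigma::=\rho\mid$ polytype; monotypes identified with $\forall\cdot.\rho$;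 template types may contain second-order variables. $\mathrm{FV}$ is the set of free index variables. $\forall\vec i.\tau\sqsupseteq\rho$ iff $\rho=\tau\{\vec i:=\vec a\}$. Subtyping $\sqsubseteq_J$: $B^a\sqsubseteq_J B^b$ if $a\le_J b$; componentwise on products; $\sigma_1\to\rho_1\sqsubseteq_J\sigma_2\to\rho_2$ if $\sigma_2\sqsubseteq_J\sigma_1$ and $\rho_1\sqsubseteq_J\rho_2$; $\forall\vec i.\rho_1\sqsubseteq_J\sigma_2$ if $\sigma_2\sqsupseteq\rho_2$, $\rho_1\sqsubseteq_J\rho_2$, $\vec i\cap\mathrm{FV}(\sigma_2)=\emptyset$. Every $s\in\mathcal F\cup\mathcal C$ has a closed declared sized type $s::\sigma$ (no second-order variables). Contexts $\Gamma$ map variables to (template) types; $\Gamma|_X$ restriction; $\Gamma\xi$ applies $\xi$ to all types. Syntax-directed typing $\Gamma\vdash_J t:\rho$: (Var) $\Gamma,x:\sigma\vdash x:\rho$ if $\sigma\sqsupseteq\rho$; (Fun) $\Gamma\vdash s:\rho$ if $s::\sigma$ and $\sigma\sqsupseteq\rho$; (Let) from $\Gamma\vdash t:\rho_1\times\rho_2$ and $\Gamma,x_1:\rho_1,x_2:\rho_2\vdash u:\rho$ infer $\Gamma\vdash\mathsf{let}\ (x_1,x_2)=t\ \mathsf{in}\ u:\rho$; (Pair) from $\Gamma\vdash t_i:\rho_i$ infer $\Gamma\vdash(t_1,t_2):\rho_1\times\rho_2$; (App) from $\Gamma\vdash t:(\forall\vec i.\tau_1)\to\rho$, $\Gamma\vdash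 u:\tau_2$, $\tau_2\sqsubseteq_J\tau_1$, $\vec i\cap\mathrm{FV}(\Gamma|_{\mathrm{FV}(u)})=\emptyset$ infer $\Gamma\vdash t\,u:\rho$. Subtyping inference $\Phi\vdash_I\sigma\sqsubseteq\tau$: $\{a\le b\}\vdash_I B^a\sqsubseteq B^b$; products: union of component constraints; arrows: from $\Phi_1\vdash_I\sigma_2\sqsubseteq\sigma_1$, $\Phi_2\vdash_I\rho_1\sqsubseteq\rho_2$ infer $\Phi_1\cup\Phi_2\vdash_I\sigma_1\to\rho_1\sqsubseteq\sigma_2\to\rho_2$; for fresh second-order $\vec\alpha$, from $\Phi\vdash_I\rho_1\sqsubseteq\rho_2\{\vec j:=\vec\alpha\}$ and $\vec i\cap\mathrm{FV}(\forall\vec j.\rho_2)=\emptyset$ infer $\Phi\cup\{\vec i\notin\rho_1\}\cup\{\vec i\notin\rho_2\}\vdash_I\forall\vec i.\rho_1\sqsubseteq\forall\vec j.\rho_2$, where $\vec i\notin\vec\rho$ is the set of occurrence constraints $i_k\notin\alpha$ for all $i_k\in\vec i$ and all second-order $\alpha$ occurring in $\vec\rho$ (for a context, in its types). Type inference $\Phi;\Gamma\vdash_I t:\rho$: (Var-I) $\emptyset;\Gamma,x:\forall\vec i.\rho\vdash_I x:\rho\{\vec i:=\vec\alpha\}$, $\vec\alpha$ fresh; (Fun-I) $\emptyset;\Gamma\vdash_I s:\rho\{\vec i:=\vec\alpha\}$ if $s\in\mathcal F\cup\mathcal C$, $s::\forall\vec i.\rho$, $\vec\alpha$ fresh; (Let-I)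 from $\Phi_1;\Gamma\vdash_I t:\rho_1\times\rho_2$ and $\Phi_2;\Gamma,x_1:\rho_1,x_2:\rho_2\vdash_I u:\rho$ infer $\Phi_1\cup\Phi_2;\Gamma\vdash_I\mathsf{let}\ (x_1,x_2)=t\ \mathsf{in}\ u:\rho$; (Pair-I) from $\Phi_i;\Gamma\vdash_I t_i:\rho_i$ infer $\Phi_1\cup\Phi_2;\Gamma\vdash_I(t_1,t_2):\rho_1\times\rho_2$; (App-I) from $\Phi_1;\Gamma\vdash_I t:(\forall\vec i.\tau_1)\to\rho$, $\Phi_2;\Gamma\vdash_I u:\tau_2$, $\Phi_3\vdash_I\tau_2\sqsubseteq\tau_1$ and $\vec i\cap\mathrm{FV}(\Gamma|_{\mathrm{FV}(u)})=\emptyset$ infer $\Phi_1\cup\Phi_2\cup\Phi_3\cup\{\vec i\notin\tau_1\}\cup\{\vec i\notin\Gamma|_{\mathrm{FV}(u)}\};\Gamma\vdash_I t\,u:\rho$. *)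

theory Defs
  imports Main
begin

text \<open>Index variables bound by a quantifier inside a type are represented
  locally nameless as IB d j (the j-th variable of the binder at depth d);
  they never occur in genuine index terms (see plain below).\<close>

datatype 'g idx = IV nat | IB nat nat | SV nat | IZ | IS "'g idx" | IP "'g idx" "'g idx"
  | IF 'g "'g idx list"

primrec ivs :: "'g idx \<Rightarrow> nat set" where
  "ivs (IV i) = {i}" | "ivs (IB d j) = {}" | "ivs (SV a) = {}" | "ivs IZ = {}"
| "ivs (IS a) = ivs a" | "ivs (IP a b) = ivs a \<union> ivs b"
| "ivs (IF g as) = \<Union> (set (map ivs as))"

primrec svs :: "'g idx \<Rightarrow> nat set" where
  "svs (IV i) = {}" | "svs (IB d j) = {}" | "svs (SV a) = {a}" | "svs IZ = {}"
| "svs (IS a) = svs a" | "svs (IP a b) = svs a \<union> svs b"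
| "svs (IF g as) = \<Union> (set (map svs as))"

primrec bvs :: "'g idx \<Rightarrow> (nat \<times> nat) set" where
  "bvs (IV i) = {}" | "bvs (IB d j) = {(d, j)}" | "bvs (SV a) = {}" | "bvs IZ = {}"
| "bvs (IS a) = bvs a" | "bvs (IP a b) = bvs a \<union> bvs b"
| "bvs (IF g as) = \<Union> (set (map bvs as))"

primrec iopen :: "nat \<Rightarrow> 'g idx list \<Rightarrow> 'g idx \<Rightarrow> 'g idx" where
  "iopen d as (IV i) = IV i"
| "iopen d as (IB k j) = (if k = d \<and> j < length as then as ! j else IB k j)"
| "iopen d as (SV a) = SV a" | "iopen d as IZ = IZ"
| "iopen d as (IS a) = IS (iopen d as a)"
| "iopen d as (IP a b) = IP (iopen d as a) (iopen d as b)"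
| "iopen d as (IF g bs) = IF g (map (iopen d as) bs)"

primrec iso :: "(nat \<Rightarrow> 'g idx) \<Rightarrow> 'g idx \<Rightarrow> 'g idx" where
  "iso \<xi> (IV i) = IV i" | "iso \<xi> (IB d j) = IB d j" | "iso \<xi> (SV a) = \<xi> a" | "iso \<xi> IZ = IZ"
| "iso \<xi> (IS a) = IS (iso \<xi> a)" | "iso \<xi> (IP a b) = IP (iso \<xi> a) (iso \<xi> b)"
| "iso \<xi> (IF g as) = IF g (map (iso \<xi>) as)"

text \<open>interpretation of index terms (0, s, + standard); only used on genuine index terms\<close>
primrec ieval :: "('g \<Rightarrow> nat list \<Rightarrow> nat) \<Rightarrow> (nat \<Rightarrow> nat) \<Rightarrow> 'g idx \<Rightarrow> nat" where
  "ieval J \<beta> (IV i) = \<beta> i" | "ieval J \<beta> (IB d j) = 0" | "ieval J \<beta> (SV a) = 0"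
| "ieval J \<beta> IZ = 0" | "ieval J \<beta> (IS a) = Suc (ieval J \<beta> a)"
| "ieval J \<beta> (IP a b) = ieval J \<beta> a + ieval J \<beta> b"
| "ieval J \<beta> (IF g as) = J g (map (ieval J \<beta>) as)"

definition plain :: "'g idx \<Rightarrow> bool" where
  "plain a \<longleftrightarrow> bvs a = {} \<and> svs a = {}"

text \<open>locally closed w.r.t. a stack of binder arities (innermost first)\<close>
definition lci :: "nat list \<Rightarrow> 'g idx \<Rightarrow> bool" where
  "lci stk a \<longleftrightarrow> (\<forall>(d, j) \<in> bvs a. d < length stk \<and> j < stk ! d)"

definition is_interp :: "('g \<Rightarrow> nat list \<Rightarrow> nat) \<Rightarrow> bool" where
  "is_interp J \<longleftrightarrow> (\<forall>g xs ys. list_all2 (\<le>) xs ys \<longrightarrow> J g xs \<le> J g ys)"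

definition ile :: "('g \<Rightarrow> nat list \<Rightarrow> nat) \<Rightarrow> 'g idx \<Rightarrow> 'g idx \<Rightarrow> bool" where
  "ile J a b \<longleftrightarrow> (\<forall>\<beta>. ieval J \<beta> a \<le> ieval J \<beta> b)"

text \<open>TB B a is B^a, TP is the product, TA n tau rho is (forall i1..in. tau) \<rightarrow> rho,
  where tau lives under the binder (its variables are IB 0 j inside tau).\<close>
datatype ('b, 'g) ty = TB 'b "'g idx" | TP "('b, 'g) ty" "('b, 'g) ty"
  | TA nat "('b, 'g) ty" "('b, 'g) ty"

text \<open>a (poly)type forall i1..in. rho; a monotype rho is identified with (0, rho)\<close>
type_synonym ('b, 'g) poly = "nat \<times> ('b, 'g) ty"

primrec tfv :: "('b, 'g) ty \<Rightarrow> nat set" where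
  "tfv (TB b a) = ivs a" | "tfv (TP r1 r2) = tfv r1 \<union> tfv r2"
| "tfv (TA n t r) = tfv t \<union> tfv r"

primrec tsv :: "('b, 'g) ty \<Rightarrow> nat set" where
  "tsv (TB b a) = svs a" | "tsv (TP r1 r2) = tsv r1 \<union> tsv r2"
| "tsv (TA n t r) = tsv t \<union> tsv r"

primrec topen :: "nat \<Rightarrow> 'g idx list \<Rightarrow> ('b, 'g) ty \<Rightarrow> ('b, 'g) ty" where
  "topen d as (TB b a) = TB b (iopen d as a)"
| "topen d as (TP r1 r2) = TP (topen d as r1) (topen d as r2)"
| "topen d as (TA n t r) = TA n (topen (Suc d) as t) (topen d as r)"

primrec tso :: "(nat \<Rightarrow> 'g idx) \<Rightarrow> ('b, 'g) ty \<Rightarrow> ('b, 'g) ty" where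
  "tso \<xi> (TB b a) = TB b (iso \<xi> a)" | "tso \<xi> (TP r1 r2) = TP (tso \<xi> r1) (tso \<xi> r2)"
| "tso \<xi> (TA n t r) = TA n (tso \<xi> t) (tso \<xi> r)"

primrec lct :: "nat list \<Rightarrow> ('b, 'g) ty \<Rightarrow> bool" where
  "lct stk (TB b a) = lci stk a" | "lct stk (TP r1 r2) = (lct stk r1 \<and> lct stk r2)"
| "lct stk (TA n t r) = (lct (n # stk) t \<and> lct stk r)"

primrec is_arrow :: "('b, 'g) ty \<Rightarrow> bool" where
  "is_arrow (TB b a) = False" | "is_arrow (TP r1 r2) = False" | "is_arrow (TA n t r) = True"

primrec wft :: "('b, 'g) ty \<Rightarrow> bool" where
  "wft (TB b a) = True" | "wft (TP r1 r2) = (wft r1 \<and> wft r2)"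
| "wft (TA n t r) = ((0 < n \<longrightarrow> is_arrow t) \<and> wft t \<and> wft r)"

definition pfv :: "('b, 'g) poly \<Rightarrow> nat set" where "pfv \<sigma> = tfv (snd \<sigma>)"
definition psv :: "('b, 'g) poly \<Rightarrow> nat set" where "psv \<sigma> = tsv (snd \<sigma>)"
definition pso :: "(nat \<Rightarrow> 'g idx) \<Rightarrow> ('b, 'g) poly \<Rightarrow> ('b, 'g) poly" where
  "pso \<xi> \<sigma> = (fst \<sigma>, tso \<xi> (snd \<sigma>))"
definition plc :: "('b, 'g) poly \<Rightarrow> bool" where "plc \<sigma> \<longleftrightarrow> lct [fst \<sigma>] (snd \<sigma>)"
definition pwf :: "('b, 'g) poly \<Rightarrow> bool" where
  "pwf \<sigma> \<longleftrightarrow> (0 < fst \<sigma> \<longrightarrow> is_arrow (snd \<sigma>)) \<and> wft (snd \<sigma>)"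

definition poly_ok :: "('b, 'g) poly \<Rightarrow> bool" where
  "poly_ok \<sigma> \<longleftrightarrow> plc \<sigma> \<and> pwf \<sigma>"
definition mono_ok :: "('b, 'g) ty \<Rightarrow> bool" where
  "mono_ok \<rho> \<longleftrightarrow> lct [] \<rho> \<and> wft \<rho>"
definition decl_ok :: "('b, 'g) poly \<Rightarrow> bool" where
  "decl_ok \<sigma> \<longleftrightarrow> poly_ok \<sigma> \<and> pfv \<sigma> = {} \<and> psv \<sigma> = {}"

definition inst :: "('b, 'g) poly \<Rightarrow> ('b, 'g) ty \<Rightarrow> bool" where
  "inst \<sigma> \<rho> \<longleftrightarrow> (\<exists>as. length as = fst \<sigma> \<and> (\<forall>a\<in>set as. plain a) \<and> \<rho> = topen 0 as (snd \<sigma>))"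

type_synonym ('v, 'b, 'g) ctx = "'v \<Rightarrow> ('b, 'g) poly option"

definition cfv :: "('v, 'b, 'g) ctx \<Rightarrow> nat set" where
  "cfv \<Gamma> = \<Union> {pfv \<sigma> | x \<sigma>. \<Gamma> x = Some \<sigma>}"
definition csv :: "('v, 'b, 'g) ctx \<Rightarrow> nat set" where
  "csv \<Gamma> = \<Union> {psv \<sigma> | x \<sigma>. \<Gamma> x = Some \<sigma>}"
definition cso :: "(nat \<Rightarrow> 'g idx) \<Rightarrow> ('v, 'b, 'g) ctx \<Rightarrow> ('v, 'b, 'g) ctx" where
  "cso \<xi> \<Gamma> = (\<lambda>x. map_option (pso \<xi>) (\<Gamma> x))"
definition ctx_ok :: "('v, 'b, 'g) ctx \<Rightarrow> bool" where
  "ctx_ok \<Gamma> \<longleftrightarrow> (\<forall>x \<sigma>. \<Gamma> x = Some \<sigma> \<longrightarrow> poly_ok \<sigma>)"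

datatype ('v, 'f) trm = TVar 'v | TSym 'f | TApp "('v, 'f) trm" "('v, 'f) trm"
  | TPair "('v, 'f) trm" "('v, 'f) trm" | TLet 'v 'v "('v, 'f) trm" "('v, 'f) trm"

primrec fvt :: "('v, 'f) trm \<Rightarrow> 'v set" where
  "fvt (TVar x) = {x}" | "fvt (TSym s) = {}" | "fvt (TApp t u) = fvt t \<union> fvt u"
| "fvt (TPair t u) = fvt t \<union> fvt u" | "fvt (TLet x y t u) = fvt t \<union> (fvt u - {x, y})"

inductive sub :: "('g \<Rightarrow> nat list \<Rightarrow> nat) \<Rightarrow> ('b, 'g) ty \<Rightarrow> ('b, 'g) ty \<Rightarrow> bool"
  and subp :: "('g \<Rightarrow> nat list \<Rightarrow> nat) \<Rightarrow> ('b, 'g) poly \<Rightarrow> ('b, 'g) poly \<Rightarrow> bool"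
  for J where
  sub_base: "ile J a a' \<Longrightarrow> sub J (TB b a) (TB b a')"
| sub_prod: "sub J r1 r1' \<Longrightarrow> sub J r2 r2' \<Longrightarrow> sub J (TP r1 r2) (TP r1' r2')"
| sub_arr: "subp J (n2, t2) (n1, t1) \<Longrightarrow> sub J r1 r2 \<Longrightarrow> sub J (TA n1 t1 r1) (TA n2 t2 r2)"
| subp_all: "length is = n1 \<Longrightarrow> distinct is \<Longrightarrow> set is \<inter> (tfv r1 \<union> pfv \<sigma>2) = {} \<Longrightarrow>
    inst \<sigma>2 r2 \<Longrightarrow> sub J (topen 0 (map IV is) r1) r2 \<Longrightarrow> subp J (n1, r1) \<sigma>2"

inductive hastype :: "('g \<Rightarrow> nat list \<Rightarrow> nat) \<Rightarrow> ('f \<Rightarrow> ('b, 'g) poly) \<Rightarrow> ('v, 'b, 'g) ctx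
    \<Rightarrow> ('v, 'f) trm \<Rightarrow> ('b, 'g) ty \<Rightarrow> bool"
  for J D where
  hastype_var: "\<Gamma> x = Some \<sigma> \<Longrightarrow> inst \<sigma> \<rho> \<Longrightarrow> hastype J D \<Gamma> (TVar x) \<rho>"
| hastype_fun: "inst (D s) \<rho> \<Longrightarrow> hastype J D \<Gamma> (TSym s) \<rho>"
| hastype_let: "hastype J D \<Gamma> t (TP r1 r2) \<Longrightarrow> hastype J D (\<Gamma>(x1 \<mapsto> (0, r1), x2 \<mapsto> (0, r2))) u \<rho> \<Longrightarrow>
    hastype J D \<Gamma> (TLet x1 x2 t u) \<rho>"
| hastype_pair: "hastype J D \<Gamma> t1 r1 \<Longrightarrow> hastype J D \<Gamma> t2 r2 \<Longrightarrow> hastype J D \<Gamma> (TPair t1 t2) (TP r1 r2)"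
| hastype_app: "hastype J D \<Gamma> t (TA n t1 \<rho>) \<Longrightarrow> hastype J D \<Gamma> u t2 \<Longrightarrow> sub J t2 (topen 0 (map IV is) t1) \<Longrightarrow>
    length is = n \<Longrightarrow> distinct is \<Longrightarrow> set is \<inter> (tfv t1 \<union> cfv (\<Gamma> |` fvt u)) = {} \<Longrightarrow>
    hastype J D \<Gamma> (TApp t u) \<rho>"

datatype 'g con = CLe "'g idx" "'g idx" | CNotIn nat nat

definition notin :: "nat list \<Rightarrow> nat set \<Rightarrow> 'g con set" where
  "notin is A = {CNotIn i \<alpha> | i \<alpha>. i \<in> set is \<and> \<alpha> \<in> A}"

primrec sat :: "('g \<Rightarrow> nat list \<Rightarrow> nat) \<Rightarrow> (nat \<Rightarrow> 'g idx) \<Rightarrow> 'g con \<Rightarrow> bool" where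
  "sat J \<xi> (CLe a b) = ile J (iso \<xi> a) (iso \<xi> b)"
| "sat J \<xi> (CNotIn i \<alpha>) = (i \<notin> ivs (\<xi> \<alpha>))"

definition model :: "('g \<Rightarrow> nat list \<Rightarrow> nat) \<Rightarrow> (nat \<Rightarrow> 'g idx) \<Rightarrow> 'g con set \<Rightarrow> bool" where
  "model J \<xi> \<Phi> \<longleftrightarrow> is_interp J \<and> (\<forall>\<alpha>. plain (\<xi> \<alpha>)) \<and> (\<forall>c\<in>\<Phi>. sat J \<xi> c)"

text \<open>The first argument S is the set of second-order variables chosen as fresh in the
  derivation; sub-derivations use pairwise disjoint supplies, which makes every fresh
  variable globally fresh.\<close>

inductive subI :: "nat set \<Rightarrow> 'g con set \<Rightarrow> ('b, 'g) ty \<Rightarrow> ('b, 'g) ty \<Rightarrow> bool"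
  and subIp :: "nat set \<Rightarrow> 'g con set \<Rightarrow> ('b, 'g) poly \<Rightarrow> ('b, 'g) poly \<Rightarrow> bool" where
  subI_base: "subI {} {CLe a a'} (TB b a) (TB b a')"
| subI_prod: "subI S1 \<Phi>1 r1 r1' \<Longrightarrow> subI S2 \<Phi>2 r2 r2' \<Longrightarrow> S1 \<inter> S2 = {} \<Longrightarrow>
    subI (S1 \<union> S2) (\<Phi>1 \<union> \<Phi>2) (TP r1 r2) (TP r1' r2')"
| subI_arr: "subIp S1 \<Phi>1 (n2, t2) (n1, t1) \<Longrightarrow> subI S2 \<Phi>2 r1 r2 \<Longrightarrow> S1 \<inter> S2 = {} \<Longrightarrow>
    subI (S1 \<union> S2) (\<Phi>1 \<union> \<Phi>2) (TA n1 t1 r1) (TA n2 t2 r2)"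
| subIp_all: "subI S \<Phi> (topen 0 (map IV is) r1) (topen 0 (map SV as) r2) \<Longrightarrow>
    length is = n1 \<Longrightarrow> distinct is \<Longrightarrow> length as = n2 \<Longrightarrow> distinct as \<Longrightarrow>
    set as \<inter> (S \<union> tsv r1 \<union> tsv r2) = {} \<Longrightarrow> set is \<inter> (tfv r1 \<union> tfv r2) = {} \<Longrightarrow>
    subIp (S \<union> set as) (\<Phi> \<union> notin is (tsv r1) \<union> notin is (tsv r2)) (n1, r1) (n2, r2)"

inductive inferI :: "('f \<Rightarrow> ('b, 'g) poly) \<Rightarrow> nat set \<Rightarrow> 'g con set \<Rightarrow> ('v, 'b, 'g) ctx
    \<Rightarrow> ('v, 'f) trm \<Rightarrow> ('b, 'g) ty \<Rightarrow> bool"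
  for D where
  inferI_var: "\<Gamma> x = Some (n, \<rho>) \<Longrightarrow> length as = n \<Longrightarrow> distinct as \<Longrightarrow> set as \<inter> csv \<Gamma> = {} \<Longrightarrow>
    inferI D (set as) {} \<Gamma> (TVar x) (topen 0 (map SV as) \<rho>)"
| inferI_fun: "D s = (n, \<rho>) \<Longrightarrow> length as = n \<Longrightarrow> distinct as \<Longrightarrow> set as \<inter> csv \<Gamma> = {} \<Longrightarrow>
    inferI D (set as) {} \<Gamma> (TSym s) (topen 0 (map SV as) \<rho>)"
| inferI_let: "inferI D S1 \<Phi>1 \<Gamma> t (TP r1 r2) \<Longrightarrow>
    inferI D S2 \<Phi>2 (\<Gamma>(x1 \<mapsto> (0, r1), x2 \<mapsto> (0, r2))) u \<rho> \<Longrightarrow> S1 \<inter> S2 = {} \<Longrightarrow>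
    inferI D (S1 \<union> S2) (\<Phi>1 \<union> \<Phi>2) \<Gamma> (TLet x1 x2 t u) \<rho>"
| inferI_pair: "inferI D S1 \<Phi>1 \<Gamma> t1 r1 \<Longrightarrow> inferI D S2 \<Phi>2 \<Gamma> t2 r2 \<Longrightarrow> S1 \<inter> S2 = {} \<Longrightarrow>
    inferI D (S1 \<union> S2) (\<Phi>1 \<union> \<Phi>2) \<Gamma> (TPair t1 t2) (TP r1 r2)"
| inferI_app: "inferI D S1 \<Phi>1 \<Gamma> t (TA n t1 \<rho>) \<Longrightarrow> inferI D S2 \<Phi>2 \<Gamma> u t2 \<Longrightarrow>
    subI S3 \<Phi>3 t2 (topen 0 (map IV is) t1) \<Longrightarrow>
    length is = n \<Longrightarrow> distinct is \<Longrightarrow> set is \<inter> (tfv t1 \<union> cfv (\<Gamma> |` fvt u)) = {} \<Longrightarrow>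
    S1 \<inter> S2 = {} \<Longrightarrow> S1 \<inter> S3 = {} \<Longrightarrow> S2 \<inter> S3 = {} \<Longrightarrow> S3 \<inter> csv \<Gamma> = {} \<Longrightarrow>
    inferI D (S1 \<union> S2 \<union> S3)
      (\<Phi>1 \<union> \<Phi>2 \<union> \<Phi>3 \<union> notin is (tsv t1) \<union> notin is (csv (\<Gamma> |` fvt u))) \<Gamma> (TApp t u) \<rho>"

end

theory Submission
  imports Defs
begin

fun csvs :: "'g con \<Rightarrow> nat set" where
  "csvs (CLe a b) = svs a \<union> svs b" | "csvs (CNotIn i \<alpha>) = {\<alpha>}"

lemma iso_cong: "(\<And>\<alpha>. \<alpha> \<in> svs a \<Longrightarrow> \<xi> \<alpha> = \<xi>' \<alpha>) \<Longrightarrow> iso \<xi> a = iso \<xi>' a"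
  by (induct a) auto

lemma tso_cong: "(\<And>\<alpha>. \<alpha> \<in> tsv r \<Longrightarrow> \<xi> \<alpha> = \<xi>' \<alpha>) \<Longrightarrow> tso \<xi> r = tso \<xi>' r"
  by (induct r) (auto intro: iso_cong)

lemma iso_nosv: "svs a = {} \<Longrightarrow> iso \<xi> a = a"
  by (induct a) (auto intro: map_idI)

lemma tso_nosv: "tsv r = {} \<Longrightarrow> tso \<xi> r = r"
  by (induct r) (auto simp: iso_nosv)

lemma iopen_nobvs: "bvs a = {} \<Longrightarrow> iopen d bs a = a"
  by (induct a) (auto intro: map_idI)

lemma iso_iopen: "(\<forall>\<alpha>. bvs (\<xi> \<alpha>) = {}) \<Longrightarrow> iso \<xi> (iopen d bs a) = iopen d (map (iso \<xi>) bs) (iso \<xi> a)"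
  by (induct a) (auto simp: iopen_nobvs)

lemma tso_topen: "(\<forall>\<alpha>. bvs (\<xi> \<alpha>) = {}) \<Longrightarrow> tso \<xi> (topen d bs r) = topen d (map (iso \<xi>) bs) (tso \<xi> r)"
  by (induct r arbitrary: d) (auto simp: iso_iopen)

lemma ivs_iso: "ivs (iso \<xi> a) = ivs a \<union> (\<Union>\<alpha>\<in>svs a. ivs (\<xi> \<alpha>))"
  by (induct a) auto

lemma tfv_tso: "tfv (tso \<xi> r) = tfv r \<union> (\<Union>\<alpha>\<in>tsv r. ivs (\<xi> \<alpha>))"
  by (induct r) (auto simp: ivs_iso)

lemma svs_iopen: "svs (iopen d bs a) \<subseteq> svs a \<union> (\<Union>b\<in>set bs. svs b)"
  by (induct a) (auto, use nth_mem in blast)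

lemma tsv_topen: "tsv (topen d bs r) \<subseteq> tsv r \<union> (\<Union>b\<in>set bs. svs b)"
  by (induct r arbitrary: d) (auto, use svs_iopen in blast)

lemma sat_cong: "(\<And>\<alpha>. \<alpha> \<in> csvs c \<Longrightarrow> \<xi> \<alpha> = \<xi>' \<alpha>) \<Longrightarrow> sat J \<xi> c = sat J \<xi>' c"
  by (cases c) (auto simp: iso_cong[of _ \<xi> \<xi>'])


lemma cso_Some: "cso \<xi> \<Gamma> x = Some \<sigma> \<longleftrightarrow> (\<exists>n r. \<Gamma> x = Some (n, r) \<and> \<sigma> = (n, tso \<xi> r))"
  by (cases "\<Gamma> x") (auto simp: cso_def pso_def)

lemma cso_upd: "cso \<xi> (\<Gamma>(x \<mapsto> (n, r))) = (cso \<xi> \<Gamma>)(x \<mapsto> (n, tso \<xi> r))"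
  by (auto simp: cso_def pso_def)

lemma cso_restrict: "cso \<xi> (\<Gamma> |` X) = cso \<xi> \<Gamma> |` X"
  by (auto simp: cso_def restrict_map_def)

lemma csv_Some: "\<Gamma> x = Some (n, r) \<Longrightarrow> tsv r \<subseteq> csv \<Gamma>"
  by (force simp: csv_def psv_def)

lemma cso_cong: "(\<And>\<alpha>. \<alpha> \<in> csv \<Gamma> \<Longrightarrow> \<xi> \<alpha> = \<xi>' \<alpha>) \<Longrightarrow> cso \<xi> \<Gamma> = cso \<xi>' \<Gamma>"
proof -
  assume h: "\<And>\<alpha>. \<alpha> \<in> csv \<Gamma> \<Longrightarrow> \<xi> \<alpha> = \<xi>' \<alpha>"
  show ?thesis
  proof
    fix x show "cso \<xi> \<Gamma> x = cso \<xi>' \<Gamma> x"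
    proof (cases "\<Gamma> x")
      case None then show ?thesis by (simp add: cso_def)
    next
      case (Some p)
      obtain n r where p: "p = (n, r)" by (cases p)
      have "tso \<xi> r = tso \<xi>' r" using csv_Some[of \<Gamma> x n r] Some p h by (auto intro: tso_cong)
      then show ?thesis using Some p by (simp add: cso_def pso_def)
    qed
  qed
qed

lemma csv_upd: "csv (\<Gamma>(x \<mapsto> (n, r))) \<subseteq> csv \<Gamma> \<union> tsv r"
  by (auto simp: csv_def psv_def split: if_splits)

lemma csv_restrict: "csv (\<Gamma> |` X) \<subseteq> csv \<Gamma>"
  by (auto simp: csv_def restrict_map_def split: if_splits)

lemma cfv_iff: "i \<in> cfv \<Gamma> \<longleftrightarrow> (\<exists>x n r. \<Gamma> x = Some (n, r) \<and> i \<in> tfv r)"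
proof
  assume "i \<in> cfv \<Gamma>"
  then obtain x \<sigma> where "\<Gamma> x = Some \<sigma>" "i \<in> tfv (snd \<sigma>)" unfolding cfv_def pfv_def by blast
  then show "\<exists>x n r. \<Gamma> x = Some (n, r) \<and> i \<in> tfv r" by (intro exI[of _ x] exI[of _ "fst \<sigma>"] exI[of _ "snd \<sigma>"]) simp
next
  assume "\<exists>x n r. \<Gamma> x = Some (n, r) \<and> i \<in> tfv r"
  then obtain x n r where "\<Gamma> x = Some (n, r)" "i \<in> tfv r" by blast
  then have "tfv r \<in> {pfv \<sigma> | x \<sigma>. \<Gamma> x = Some \<sigma>}" unfolding pfv_def by force
  then show "i \<in> cfv \<Gamma>" unfolding cfv_def using \<open>i \<in> tfv r\<close> by blast
qed

lemma csv_iff: "i \<in> csv \<Gamma> \<longleftrightarrow> (\<exists>x n r. \<Gamma> x = Some (n, r) \<and> i \<in> tsv r)"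
proof
  assume "i \<in> csv \<Gamma>"
  then obtain x \<sigma> where "\<Gamma> x = Some \<sigma>" "i \<in> tsv (snd \<sigma>)" unfolding csv_def psv_def by blast
  then show "\<exists>x n r. \<Gamma> x = Some (n, r) \<and> i \<in> tsv r" by (intro exI[of _ x] exI[of _ "fst \<sigma>"] exI[of _ "snd \<sigma>"]) simp
next
  assume "\<exists>x n r. \<Gamma> x = Some (n, r) \<and> i \<in> tsv r"
  then obtain x n r where "\<Gamma> x = Some (n, r)" "i \<in> tsv r" by blast
  then have "tsv r \<in> {psv \<sigma> | x \<sigma>. \<Gamma> x = Some \<sigma>}" unfolding psv_def by force
  then show "i \<in> csv \<Gamma>" unfolding csv_def using \<open>i \<in> tsv r\<close> by blast
qed

lemma cfv_cso: "cfv (cso \<xi> \<Gamma>) = cfv \<Gamma> \<union> (\<Union>\<alpha>\<in>csv \<Gamma>. ivs (\<xi> \<alpha>))"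
proof (rule set_eqI)
  fix i
  have "i \<in> cfv (cso \<xi> \<Gamma>) \<longleftrightarrow> (\<exists>x n r. \<Gamma> x = Some (n, r) \<and> i \<in> tfv (tso \<xi> r))"
    unfolding cfv_iff cso_Some by auto
  also have "\<dots> \<longleftrightarrow> i \<in> cfv \<Gamma> \<union> (\<Union>\<alpha>\<in>csv \<Gamma>. ivs (\<xi> \<alpha>))"
    by (simp only: tfv_tso cfv_iff UN_iff Un_iff Bex_def csv_iff) blast
  finally show "i \<in> cfv (cso \<xi> \<Gamma>) \<longleftrightarrow> i \<in> cfv \<Gamma> \<union> (\<Union>\<alpha>\<in>csv \<Gamma>. ivs (\<xi> \<alpha>))" .
qed

lemma fresh_list: "finite (A :: nat set) \<Longrightarrow> \<exists>as. length as = n \<and> distinct as \<and> set as \<inter> A = {}"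
proof -
  assume f: "finite A"
  define m where "m = Suc (Max (insert 0 A))"
  have "\<forall>x\<in>A. x < m" using f by (auto simp: m_def le_imp_less_Suc)
  then show ?thesis by (intro exI[of _ "[m..<m+n]"]) auto
qed

lemma upd_list: "length as = length bs \<Longrightarrow> distinct as \<Longrightarrow>
  \<exists>\<xi>'. map \<xi>' as = bs \<and> (\<forall>\<alpha>. \<alpha> \<notin> set as \<longrightarrow> \<xi>' \<alpha> = (\<xi> :: nat \<Rightarrow> 'a) \<alpha>)"
proof (induct as arbitrary: bs)
  case Nil then show ?case by auto
next
  case (Cons a as)
  then obtain b bs' where bs: "bs = b # bs'" by (cases bs) auto
  with Cons obtain \<xi>' where h: "map \<xi>' as = bs'" "\<forall>\<alpha>. \<alpha> \<notin> set as \<longrightarrow> \<xi>' \<alpha> = \<xi> \<alpha>" by auto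
  have "map (\<xi>'(a := b)) as = map \<xi>' as" using Cons(3) by (auto intro: map_cong)
  then show ?case using h bs by (intro exI[of _ "\<xi>'(a := b)"]) auto
qed

lemma upd_plain: "map \<xi>' as = bs \<Longrightarrow> (\<forall>\<alpha>. \<alpha> \<notin> set as \<longrightarrow> \<xi>' \<alpha> = \<xi> \<alpha>) \<Longrightarrow>
   (\<forall>\<alpha>. plain (\<xi> \<alpha>)) \<Longrightarrow> (\<forall>b\<in>set bs. plain b) \<Longrightarrow> (\<forall>\<alpha>. plain (\<xi>' \<alpha>))"
  by (metis imageI list.set_map)

lemma tso_TB: "tso \<xi> \<sigma> = TB b a \<longleftrightarrow> (\<exists>a0. \<sigma> = TB b a0 \<and> iso \<xi> a0 = a)"
  by (cases \<sigma>) auto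
lemma tso_TP: "tso \<xi> \<sigma> = TP r1 r2 \<longleftrightarrow> (\<exists>q1 q2. \<sigma> = TP q1 q2 \<and> tso \<xi> q1 = r1 \<and> tso \<xi> q2 = r2)"
  by (cases \<sigma>) auto
lemma tso_TA: "tso \<xi> \<sigma> = TA n r1 r2 \<longleftrightarrow> (\<exists>q1 q2. \<sigma> = TA n q1 q2 \<and> tso \<xi> q1 = r1 \<and> tso \<xi> q2 = r2)"
  by (cases \<sigma>) auto

definition good :: "('g \<Rightarrow> nat list \<Rightarrow> nat) \<Rightarrow> nat set \<Rightarrow> 'g con set \<Rightarrow> (nat \<Rightarrow> 'g idx) \<Rightarrow> (nat \<Rightarrow> 'g idx) \<Rightarrow> nat set \<Rightarrow> bool" where
  "good J S \<Phi> \<xi> \<xi>' A \<longleftrightarrow> finite S \<and> S \<inter> A = {} \<and> (\<forall>\<alpha>. \<alpha> \<notin> S \<longrightarrow> \<xi>' \<alpha> = \<xi> \<alpha>) \<and>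
     (\<forall>\<alpha>. plain (\<xi>' \<alpha>)) \<and> (\<forall>c\<in>\<Phi>. sat J \<xi>' c \<and> csvs c \<subseteq> S \<union> A)"

lemma good_trans:
  assumes g1: "good J S1 \<Phi>1 \<xi> \<xi>1 A" and g2: "good J S2 \<Phi>2 \<xi>1 \<xi>2 (A \<union> S1)"
  shows "good J (S1 \<union> S2) (\<Phi>1 \<union> \<Phi>2) \<xi> \<xi>2 A \<and> S1 \<inter> S2 = {}"
proof -
  have f: "finite S1" "finite S2" using g1 g2 unfolding good_def by auto
  have d1: "S1 \<inter> A = {}" and d2: "S2 \<inter> (A \<union> S1) = {}" using g1 g2 unfolding good_def by auto
  have e1: "\<forall>\<alpha>. \<alpha> \<notin> S1 \<longrightarrow> \<xi>1 \<alpha> = \<xi> \<alpha>" and e2: "\<forall>\<alpha>. \<alpha> \<notin> S2 \<longrightarrow> \<xi>2 \<alpha> = \<xi>1 \<alpha>"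
    using g1 g2 unfolding good_def by auto
  have p: "\<forall>\<alpha>. plain (\<xi>2 \<alpha>)" using g2 unfolding good_def by auto
  have h1: "\<forall>c\<in>\<Phi>1. sat J \<xi>1 c \<and> csvs c \<subseteq> S1 \<union> A"
    and h2: "\<forall>c\<in>\<Phi>2. sat J \<xi>2 c \<and> csvs c \<subseteq> S2 \<union> (A \<union> S1)"
    using g1 g2 unfolding good_def by auto
  have s: "\<forall>c\<in>\<Phi>1 \<union> \<Phi>2. sat J \<xi>2 c \<and> csvs c \<subseteq> (S1 \<union> S2) \<union> A"
  proof
    fix c assume c: "c \<in> \<Phi>1 \<union> \<Phi>2"
    show "sat J \<xi>2 c \<and> csvs c \<subseteq> (S1 \<union> S2) \<union> A"
    proof (cases "c \<in> \<Phi>1")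
      case True
      have "sat J \<xi>2 c = sat J \<xi>1 c" using h1 d2 e2 True by (intro sat_cong) blast
      then show ?thesis using True h1 by blast
    qed (use c h2 in blast)
  qed
  have e: "\<forall>\<alpha>. \<alpha> \<notin> S1 \<union> S2 \<longrightarrow> \<xi>2 \<alpha> = \<xi> \<alpha>" using e1 e2 by auto
  show ?thesis unfolding good_def using f d1 d2 e p s by blast
qed


lemma good_agree: "good J S \<Phi> \<xi> \<xi>' A \<Longrightarrow> tsv r \<subseteq> A \<Longrightarrow> tso \<xi>' r = tso \<xi> r"
  unfolding good_def by (intro tso_cong) blast

lemma good_plain: "good J S \<Phi> \<xi> \<xi>' A \<Longrightarrow> \<forall>\<alpha>. plain (\<xi>' \<alpha>)"
  unfolding good_def by blast

lemma good_finite: "good J S \<Phi> \<xi> \<xi>' A \<Longrightarrow> finite S"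
  unfolding good_def by blast

lemma good_disj: "good J S \<Phi> \<xi> \<xi>' A \<Longrightarrow> S \<inter> A = {}"
  unfolding good_def by blast

lemma model_Un: "model J \<xi> (\<Phi> \<union> \<Psi>) \<longleftrightarrow> model J \<xi> \<Phi> \<and> model J \<xi> \<Psi>"
  unfolding model_def by blast

lemma model_notin: "model J \<xi> (notin is B) \<Longrightarrow> i \<in> set is \<Longrightarrow> \<alpha> \<in> B \<Longrightarrow> i \<notin> ivs (\<xi> \<alpha>)"
  unfolding model_def notin_def by force

lemma model_bvs: "model J \<xi> \<Phi> \<Longrightarrow> \<forall>\<alpha>. bvs (\<xi> \<alpha>) = {}"
  unfolding model_def plain_def by blast

lemma subI_sound:
  fixes x y :: "('b, 'g) ty" and p q :: "('b, 'g) poly"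
  shows "subI S \<Phi> x y \<Longrightarrow> model J \<xi> \<Phi> \<longrightarrow> sub J (tso \<xi> x) (tso \<xi> y)"
  "subIp S' \<Phi>' p q \<Longrightarrow> model J \<xi> \<Phi>' \<longrightarrow> subp J (pso \<xi> p) (pso \<xi> q)"
proof (induct rule: subI_subIp.inducts)
  case (subI_base a a' b)
  then show ?case by (auto simp: model_def intro: sub_base)
next
  case (subI_prod S1 \<Phi>1 r1 r1' S2 \<Phi>2 r2 r2')
  then show ?case by (auto simp: model_Un intro: sub_prod)
next
  case (subI_arr S1 \<Phi>1 n2 t2 n1 t1 S2 \<Phi>2 r1 r2)
  then show ?case by (auto simp: model_Un pso_def intro: sub_arr)
next
  case (subIp_all S \<Phi> "is" r1 "as" r2 n1 n2)
  show ?case proof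
  assume prems: "model J \<xi> (\<Phi> \<union> notin is (tsv r1) \<union> notin is (tsv r2))"
  have m: "model J \<xi> \<Phi>" and m1: "model J \<xi> (notin is (tsv r1))" and m2: "model J \<xi> (notin is (tsv r2))"
    using prems by (auto simp: model_Un)
  have pb: "\<forall>\<alpha>. bvs (\<xi> \<alpha>) = {}" using model_bvs[OF m] .
  have ih: "sub J (topen 0 (map IV is) (tso \<xi> r1)) (topen 0 (map \<xi> as) (tso \<xi> r2))"
    using subIp_all(2) m by (simp add: tso_topen[OF pb] comp_def)
  have d: "set is \<inter> (tfv (tso \<xi> r1) \<union> pfv (n2, tso \<xi> r2)) = {}"
    using subIp_all(8) model_notin[OF m1] model_notin[OF m2] by (auto simp: tfv_tso pfv_def)
  have i: "inst (n2, tso \<xi> r2) (topen 0 (map \<xi> as) (tso \<xi> r2))"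
    unfolding inst_def using subIp_all(5) m
    by (intro exI[of _ "map \<xi> as"]) (auto simp: model_def)
  show "subp J (pso \<xi> (n1, r1)) (pso \<xi> (n2, r2))" unfolding pso_def fst_conv snd_conv
    by (rule subp_all[OF subIp_all(3) subIp_all(4) d i ih])
  qed
qed


lemma pso_eq: "pso \<xi> \<sigma> = (n, r) \<longleftrightarrow> (\<exists>s. \<sigma> = (n, s) \<and> tso \<xi> s = r)"
  by (cases \<sigma>) (auto simp: pso_def)

lemma sub_complete:
  fixes x y :: "('b, 'g) ty" and p q :: "('b, 'g) poly"
  shows "sub J x y \<Longrightarrow> \<forall>\<sigma> \<tau> \<xi> A. finite A \<longrightarrow> tso \<xi> \<sigma> = x \<longrightarrow> tso \<xi> \<tau> = y \<longrightarrow> (\<forall>\<alpha>. plain (\<xi> \<alpha>))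
     \<longrightarrow> tsv \<sigma> \<union> tsv \<tau> \<subseteq> A \<longrightarrow> (\<exists>S \<Phi> \<xi>'. subI S \<Phi> \<sigma> \<tau> \<and> good J S \<Phi> \<xi> \<xi>' A)"
  and "subp J p q \<Longrightarrow> \<forall>\<sigma> \<tau> \<xi> A. finite A \<longrightarrow> pso \<xi> \<sigma> = p \<longrightarrow> pso \<xi> \<tau> = q \<longrightarrow> (\<forall>\<alpha>. plain (\<xi> \<alpha>))
     \<longrightarrow> psv \<sigma> \<union> psv \<tau> \<subseteq> A \<longrightarrow> (\<exists>S \<Phi> \<xi>'. subIp S \<Phi> \<sigma> \<tau> \<and> good J S \<Phi> \<xi> \<xi>' A)"
proof (induct rule: sub_subp.inducts)
  case (sub_base a a' b)
  show ?case
  proof (intro allI impI)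
    fix \<sigma> \<tau> :: "('b, 'g) ty" and \<xi> A
    assume "finite A" "tso \<xi> \<sigma> = TB b a" "tso \<xi> \<tau> = TB b a'" and p: "\<forall>\<alpha>. plain (\<xi> \<alpha>)"
      and s: "tsv \<sigma> \<union> tsv \<tau> \<subseteq> A"
    then obtain a0 a1 where e: "\<sigma> = TB b a0" "iso \<xi> a0 = a" "\<tau> = TB b a1" "iso \<xi> a1 = a'"
      by (auto simp: tso_TB)
    have "subI {} {CLe a0 a1} \<sigma> \<tau>" using e subI_base by simp
    moreover have "good J {} {CLe a0 a1} \<xi> \<xi> A" using sub_base e s p by (auto simp: good_def)
    ultimately show "\<exists>S \<Phi> \<xi>'. subI S \<Phi> \<sigma> \<tau> \<and> good J S \<Phi> \<xi> \<xi>' A" by blast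
  qed
next
  case (sub_prod r1 r1' r2 r2')
  show ?case
  proof (intro allI impI)
    fix \<sigma> \<tau> :: "('b, 'g) ty" and \<xi> A
    assume A: "finite A" and "tso \<xi> \<sigma> = TP r1 r2" "tso \<xi> \<tau> = TP r1' r2'" and p: "\<forall>\<alpha>. plain (\<xi> \<alpha>)"
      and s: "tsv \<sigma> \<union> tsv \<tau> \<subseteq> A"
    then obtain q1 q2 p1 p2 where e: "\<sigma> = TP q1 q2" "tso \<xi> q1 = r1" "tso \<xi> q2 = r2"
      "\<tau> = TP p1 p2" "tso \<xi> p1 = r1'" "tso \<xi> p2 = r2'"
      by (auto simp: tso_TP)
    have "tsv q1 \<union> tsv p1 \<subseteq> A" using e s by auto
    from sub_prod(2)[rule_format, OF A e(2) e(5) p[rule_format] this]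
    obtain S1 \<Phi>1 \<xi>1 where h1: "subI S1 \<Phi>1 q1 p1" "good J S1 \<Phi>1 \<xi> \<xi>1 A" by blast
    have e2: "tso \<xi>1 q2 = r2" "tso \<xi>1 p2 = r2'" using good_agree[OF h1(2)] e s by auto
    have "tsv q2 \<union> tsv p2 \<subseteq> A \<union> S1" using e s by auto
    moreover have "finite (A \<union> S1)" using A good_finite[OF h1(2)] by simp
    ultimately obtain S2 \<Phi>2 \<xi>2 where h2: "subI S2 \<Phi>2 q2 p2" "good J S2 \<Phi>2 \<xi>1 \<xi>2 (A \<union> S1)"
      using sub_prod(4)[rule_format, OF _ e2(1) e2(2) good_plain[OF h1(2), rule_format]] by blast
    from good_trans[OF h1(2) h2(2)] h1(1) h2(1) e show "\<exists>S \<Phi> \<xi>'. subI S \<Phi> \<sigma> \<tau> \<and> good J S \<Phi> \<xi> \<xi>' A"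
      by (blast intro: subI_prod)
  qed
next
  case (sub_arr n2 t2 n1 t1 r1 r2)
  show ?case
  proof (intro allI impI)
    fix \<sigma> \<tau> :: "('b, 'g) ty" and \<xi> A
    assume A: "finite A" and "tso \<xi> \<sigma> = TA n1 t1 r1" "tso \<xi> \<tau> = TA n2 t2 r2" and p: "\<forall>\<alpha>. plain (\<xi> \<alpha>)"
      and s: "tsv \<sigma> \<union> tsv \<tau> \<subseteq> A"
    then obtain s1 q1 s2 q2 where e: "\<sigma> = TA n1 s1 q1" "tso \<xi> s1 = t1" "tso \<xi> q1 = r1"
      "\<tau> = TA n2 s2 q2" "tso \<xi> s2 = t2" "tso \<xi> q2 = r2"
      by (auto simp: tso_TA)
    have "pso \<xi> (n2, s2) = (n2, t2)" "pso \<xi> (n1, s1) = (n1, t1)" "psv (n2, s2) \<union> psv (n1, s1) \<subseteq> A"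
      using e s by (auto simp: pso_def psv_def)
    then obtain S1 \<Phi>1 \<xi>1 where h1: "subIp S1 \<Phi>1 (n2, s2) (n1, s1)" "good J S1 \<Phi>1 \<xi> \<xi>1 A"
      using sub_arr(2)[rule_format, where \<sigma>="(n2, s2)" and \<tau>="(n1, s1)" and \<xi>=\<xi> and A=A, OF A _ _ p[rule_format]] by blast
    have e2: "tso \<xi>1 q1 = r1" "tso \<xi>1 q2 = r2" using good_agree[OF h1(2)] e s by auto
    have "tsv q1 \<union> tsv q2 \<subseteq> A \<union> S1" using e s by auto
    moreover have "finite (A \<union> S1)" using A good_finite[OF h1(2)] by simp
    ultimately obtain S2 \<Phi>2 \<xi>2 where h2: "subI S2 \<Phi>2 q1 q2" "good J S2 \<Phi>2 \<xi>1 \<xi>2 (A \<union> S1)"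
      using sub_arr(4)[rule_format, OF _ e2(1) e2(2) good_plain[OF h1(2), rule_format]] by blast
    from good_trans[OF h1(2) h2(2)] h1(1) h2(1) e show "\<exists>S \<Phi> \<xi>'. subI S \<Phi> \<sigma> \<tau> \<and> good J S \<Phi> \<xi> \<xi>' A"
      by (blast intro: subI_arr)
  qed
next
  case (subp_all "is" n1 r1 \<sigma>2 r2)
  show ?case
  proof (intro allI impI)
    fix \<sigma> \<tau> :: "('b, 'g) poly" and \<xi> A
    assume A: "finite A" and e1: "pso \<xi> \<sigma> = (n1, r1)" and e2: "pso \<xi> \<tau> = \<sigma>2" and p: "\<forall>\<alpha>. plain (\<xi> \<alpha>)"
      and s: "psv \<sigma> \<union> psv \<tau> \<subseteq> A"
    obtain s1 where es1: "\<sigma> = (n1, s1)" "tso \<xi> s1 = r1" using e1 by (auto simp: pso_eq)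
    obtain m s2 where es2: "\<tau> = (m, s2)" "\<sigma>2 = (m, tso \<xi> s2)" using e2 by (cases \<tau>) (auto simp: pso_def)
    have s1A: "tsv s1 \<subseteq> A" and s2A: "tsv s2 \<subseteq> A" using s es1 es2 by (auto simp: psv_def)
    obtain bs where bs: "length bs = m" "\<forall>b\<in>set bs. plain b" "r2 = topen 0 bs (tso \<xi> s2)"
      using subp_all(4) es2 by (auto simp: inst_def)
    obtain as where as: "length as = m" "distinct as" "set as \<inter> A = {}" using fresh_list[OF A] by blast
    obtain \<xi>a where xa: "map \<xi>a as = bs" "\<forall>\<alpha>. \<alpha> \<notin> set as \<longrightarrow> \<xi>a \<alpha> = \<xi> \<alpha>"
      using upd_list[of "as" bs \<xi>] as bs by auto
    have pa: "\<forall>\<alpha>. plain (\<xi>a \<alpha>)" using upd_plain[OF xa p bs(2)] .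
    have pb: "\<forall>\<alpha>. bvs (\<xi>a \<alpha>) = {}" using pa by (simp add: plain_def)
    have c1: "tso \<xi>a s1 = tso \<xi> s1" using xa(2) s1A as(3) by (intro tso_cong) blast
    have c2: "tso \<xi>a s2 = tso \<xi> s2" using xa(2) s2A as(3) by (intro tso_cong) blast
    have f1: "tso \<xi>a (topen 0 (map IV is) s1) = topen 0 (map IV is) r1"
      using c1 es1 by (simp add: tso_topen[OF pb] comp_def)
    have f2: "tso \<xi>a (topen 0 (map SV as) s2) = r2"
      using c2 bs xa by (simp add: tso_topen[OF pb] comp_def)
    have t1: "tsv (topen 0 (map IV is) s1) \<subseteq> A \<union> set as"
      using tsv_topen[of 0 "map IV is" s1] s1A by auto
    have t2: "tsv (topen 0 (map SV as) s2) \<subseteq> A \<union> set as"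
      using tsv_topen[of 0 "map SV as" s2] s2A by auto
    have fin: "finite (A \<union> set as)" using A by simp
    have tt: "tsv (topen 0 (map IV is) s1) \<union> tsv (topen 0 (map SV as) s2) \<subseteq> A \<union> set as"
      using t1 t2 by (rule Un_least)
    from subp_all(6)[rule_format, OF fin f1 f2 pa[rule_format] tt]
    obtain S \<Phi> \<xi>' where h: "subI S \<Phi> (topen 0 (map IV is) s1) (topen 0 (map SV as) s2)"
      "good J S \<Phi> \<xi>a \<xi>' (A \<union> set as)" by blast
    have dS: "S \<inter> (A \<union> set as) = {}" using good_disj[OF h(2)] .
    have fv1: "tfv s1 \<subseteq> tfv r1" using es1 by (auto simp: tfv_tso)
    have fv2: "tfv s2 \<subseteq> pfv \<sigma>2" using es2 by (auto simp: tfv_tso pfv_def)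
    have sI: "subIp (S \<union> set as) (\<Phi> \<union> notin is (tsv s1) \<union> notin is (tsv s2)) (n1, s1) (m, s2)"
    proof (rule subIp_all[OF h(1) subp_all(1) subp_all(2) as(1) as(2)])
      show "set as \<inter> (S \<union> tsv s1 \<union> tsv s2) = {}" using dS as(3) s1A s2A by blast
      show "set is \<inter> (tfv s1 \<union> tfv s2) = {}" using subp_all(3) fv1 fv2 by blast
    qed
    have agr: "\<forall>\<alpha>\<in>A. \<xi>' \<alpha> = \<xi> \<alpha>"
    proof
      fix \<alpha> assume "\<alpha> \<in> A"
      then have "\<alpha> \<notin> S" "\<alpha> \<notin> set as" using dS as(3) by blast+
      then show "\<xi>' \<alpha> = \<xi> \<alpha>" using h(2) xa(2) unfolding good_def by simp
    qed
    have hP: "\<forall>c\<in>\<Phi>. sat J \<xi>' c \<and> csvs c \<subseteq> S \<union> (A \<union> set as)" using h(2) unfolding good_def by blast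
    have ni: "\<forall>i\<in>set is. \<forall>\<alpha>\<in>tsv s1 \<union> tsv s2. i \<notin> ivs (\<xi> \<alpha>)"
      using subp_all(3) es1 es2 by (auto simp: tfv_tso pfv_def)
    have gN: "\<forall>c\<in>notin is (tsv s1) \<union> notin is (tsv s2). sat J \<xi>' c \<and> csvs c \<subseteq> (S \<union> set as) \<union> A"
    proof
      fix c :: "'g con" assume "c \<in> notin is (tsv s1) \<union> notin is (tsv s2)"
      then obtain i \<alpha> where c: "c = CNotIn i \<alpha>" "i \<in> set is" "\<alpha> \<in> tsv s1 \<union> tsv s2"
        unfolding notin_def by blast
      have "\<alpha> \<in> A" using c s1A s2A by blast
      then show "sat J \<xi>' c \<and> csvs c \<subseteq> (S \<union> set as) \<union> A" using c ni agr by simp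
    qed
    have "good J (S \<union> set as) (\<Phi> \<union> notin is (tsv s1) \<union> notin is (tsv s2)) \<xi> \<xi>' A"
      unfolding good_def
    proof (intro conjI)
      show "finite (S \<union> set as)" using good_finite[OF h(2)] by simp
      show "(S \<union> set as) \<inter> A = {}" using dS as(3) by blast
      show "\<forall>\<alpha>. \<alpha> \<notin> S \<union> set as \<longrightarrow> \<xi>' \<alpha> = \<xi> \<alpha>" using h(2) xa(2) unfolding good_def by simp
      show "\<forall>\<alpha>. plain (\<xi>' \<alpha>)" using good_plain[OF h(2)] .
      show "\<forall>c\<in>\<Phi> \<union> notin is (tsv s1) \<union> notin is (tsv s2). sat J \<xi>' c \<and> csvs c \<subseteq> S \<union> set as \<union> A"
        using hP gN by blast
    qed
    then show "\<exists>S \<Phi> \<xi>'. subIp S \<Phi> \<sigma> \<tau> \<and> good J S \<Phi> \<xi> \<xi>' A" using sI es1 es2 by blast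
  qed
qed


lemma good_agree_ctx: "good J S \<Phi> \<xi> \<xi>' A \<Longrightarrow> csv \<Gamma> \<subseteq> A \<Longrightarrow> cso \<xi>' \<Gamma> = cso \<xi> \<Gamma>"
  unfolding good_def by (intro cso_cong) blast

lemma good_add: "good J S \<Phi> \<xi> \<xi>' A \<Longrightarrow> (\<forall>c\<in>N. sat J \<xi>' c \<and> csvs c \<subseteq> S \<union> A) \<Longrightarrow> good J S (\<Phi> \<union> N) \<xi> \<xi>' A"
  unfolding good_def by blast

lemma inferI_sound:
  assumes decl: "\<And>s. decl_ok (D s)"
  shows "inferI D S \<Phi> \<Gamma> t \<rho> \<Longrightarrow> model J \<xi> \<Phi> \<Longrightarrow> hastype J D (cso \<xi> \<Gamma>) t (tso \<xi> \<rho>)"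
proof (induct rule: inferI.induct)
  case (inferI_var \<Gamma> x n \<rho> as)
  have pb: "\<forall>\<alpha>. bvs (\<xi> \<alpha>) = {}" using model_bvs[OF inferI_var.prems] .
  have g: "cso \<xi> \<Gamma> x = Some (n, tso \<xi> \<rho>)" using inferI_var(1) by (simp add: cso_Some)
  have "inst (n, tso \<xi> \<rho>) (tso \<xi> (topen 0 (map SV as) \<rho>))"
    unfolding inst_def tso_topen[OF pb] using inferI_var(2) inferI_var.prems
    by (intro exI[of _ "map \<xi> as"]) (auto simp: model_def comp_def)
  then show ?case using g by (intro hastype_var[where \<Gamma>="cso \<xi> \<Gamma>" and x=x and \<sigma>="(n, tso \<xi> \<rho>)"])
next
  case (inferI_fun s n \<rho> as \<Gamma>)
  have pb: "\<forall>\<alpha>. bvs (\<xi> \<alpha>) = {}" using model_bvs[OF inferI_fun.prems] .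
  have "tsv \<rho> = {}" using decl[of s] inferI_fun(1) by (simp add: decl_ok_def psv_def)
  then have e: "tso \<xi> \<rho> = \<rho>" by (rule tso_nosv)
  have "inst (D s) (tso \<xi> (topen 0 (map SV as) \<rho>))"
    unfolding inst_def tso_topen[OF pb] e using inferI_fun(1,2) inferI_fun.prems
    by (intro exI[of _ "map \<xi> as"]) (auto simp: model_def comp_def)
  then show ?case by (rule hastype_fun)
next
  case (inferI_let S1 \<Phi>1 \<Gamma> t r1 r2 S2 \<Phi>2 x1 x2 u \<rho>)
  have m1: "model J \<xi> \<Phi>1" and m2: "model J \<xi> \<Phi>2" using inferI_let.prems by (auto simp: model_Un)
  have h1: "hastype J D (cso \<xi> \<Gamma>) t (TP (tso \<xi> r1) (tso \<xi> r2))" using inferI_let(2)[OF m1] by simp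
  have h2: "hastype J D ((cso \<xi> \<Gamma>)(x1 \<mapsto> (0, tso \<xi> r1), x2 \<mapsto> (0, tso \<xi> r2))) u (tso \<xi> \<rho>)"
    using inferI_let(4)[OF m2] by (simp only: cso_upd)
  show ?case by (rule hastype_let[OF h1 h2])
next
  case (inferI_pair S1 \<Phi>1 \<Gamma> t1 r1 S2 \<Phi>2 t2 r2)
  then show ?case by (auto simp: model_Un intro: hastype_pair)
next
  case (inferI_app S1 \<Phi>1 \<Gamma> t n t1 \<rho> S2 \<Phi>2 u t2 S3 \<Phi>3 "is")
  have m1: "model J \<xi> \<Phi>1" and m2: "model J \<xi> \<Phi>2" and m3: "model J \<xi> \<Phi>3"
    and n1: "model J \<xi> (notin is (tsv t1))" and n2: "model J \<xi> (notin is (csv (\<Gamma> |` fvt u)))"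
    using inferI_app.prems by (auto simp: model_Un)
  have pb: "\<forall>\<alpha>. bvs (\<xi> \<alpha>) = {}" using model_bvs[OF m1] .
  have h1: "hastype J D (cso \<xi> \<Gamma>) t (TA n (tso \<xi> t1) (tso \<xi> \<rho>))" using inferI_app(2)[OF m1] by simp
  have h2: "hastype J D (cso \<xi> \<Gamma>) u (tso \<xi> t2)" using inferI_app(4)[OF m2] .
  have s: "sub J (tso \<xi> t2) (topen 0 (map IV is) (tso \<xi> t1))"
    using subI_sound(1)[OF inferI_app(5), rule_format, OF m3] by (simp add: tso_topen[OF pb] comp_def)
  have d: "set is \<inter> (tfv (tso \<xi> t1) \<union> cfv (cso \<xi> \<Gamma> |` fvt u)) = {}"
    using inferI_app(8) model_notin[OF n1] model_notin[OF n2]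
    by (auto simp: tfv_tso cfv_cso simp flip: cso_restrict)
  show ?case by (rule hastype_app[OF h1 h2 s inferI_app(6) inferI_app(7) d])
qed


lemma hastype_complete:
  fixes \<Gamma>' :: "('v, 'b, 'g) ctx" and t :: "('v, 'f) trm"
  assumes decl: "\<And>s. decl_ok (D s)"
  shows "hastype J D \<Gamma>' t \<rho> \<Longrightarrow> \<forall>\<Gamma> \<xi> A. finite A \<longrightarrow> \<Gamma>' = cso \<xi> \<Gamma> \<longrightarrow> (\<forall>\<alpha>. plain (\<xi> \<alpha>)) \<longrightarrow>
     csv \<Gamma> \<subseteq> A \<longrightarrow> (\<exists>\<tau> S \<Phi> \<xi>'. tso \<xi>' \<tau> = \<rho> \<and> inferI D S \<Phi> \<Gamma> t \<tau> \<and> tsv \<tau> \<subseteq> S \<union> A \<and> good J S \<Phi> \<xi> \<xi>' A)"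
proof (induct rule: hastype.induct)
  case (hastype_var \<Gamma>' x \<sigma> \<rho>)
  show ?case
  proof (intro allI impI)
    fix \<Gamma> :: "('v, 'b, 'g) ctx" and \<xi> A
    assume A: "finite A" and e\<Gamma>: "\<Gamma>' = cso \<xi> \<Gamma>" and p: "\<forall>\<alpha>. plain (\<xi> \<alpha>)" and cA: "csv \<Gamma> \<subseteq> A"
    obtain n r0 where g: "\<Gamma> x = Some (n, r0)" and \<sigma>: "\<sigma> = (n, tso \<xi> r0)"
      using hastype_var(1) e\<Gamma> by (auto simp: cso_Some)
    obtain bs where bs: "length bs = n" "\<forall>b\<in>set bs. plain b" "\<rho> = topen 0 bs (tso \<xi> r0)"
      using hastype_var(2) \<sigma> by (auto simp: inst_def)
    obtain as where as: "length as = n" "distinct as" "set as \<inter> A = {}" using fresh_list[OF A] by blast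
    obtain \<xi>a where xa: "map \<xi>a as = bs" "\<forall>\<alpha>. \<alpha> \<notin> set as \<longrightarrow> \<xi>a \<alpha> = \<xi> \<alpha>"
      using upd_list[of "as" bs \<xi>] as bs by auto
    have pa: "\<forall>\<alpha>. plain (\<xi>a \<alpha>)" using upd_plain[OF xa p bs(2)] .
    have pb: "\<forall>\<alpha>. bvs (\<xi>a \<alpha>) = {}" using pa by (simp add: plain_def)
    have r0A: "tsv r0 \<subseteq> A" using csv_Some[of \<Gamma> x n r0, OF g] cA by blast
    have c: "tso \<xi>a r0 = tso \<xi> r0" using xa(2) r0A as(3) by (intro tso_cong) blast
    have e: "tso \<xi>a (topen 0 (map SV as) r0) = \<rho>"
      using c bs xa by (simp add: tso_topen[OF pb] comp_def)
    have i: "inferI D (set as) {} \<Gamma> (TVar x) (topen 0 (map SV as) r0)"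
      using inferI_var[where \<Gamma>=\<Gamma> and x=x, OF g as(1) as(2)] as(3) cA by blast
    have t: "tsv (topen 0 (map SV as) r0) \<subseteq> set as \<union> A"
      using tsv_topen[of 0 "map SV as" r0] r0A by auto
    have "good J (set as) {} \<xi> \<xi>a A" unfolding good_def using as(3) xa(2) pa by auto
    then show "\<exists>\<tau> S \<Phi> \<xi>'. tso \<xi>' \<tau> = \<rho> \<and> inferI D S \<Phi> \<Gamma> (TVar x) \<tau> \<and> tsv \<tau> \<subseteq> S \<union> A \<and> good J S \<Phi> \<xi> \<xi>' A"
      using e i t by blast
  qed
next
  case (hastype_fun s \<rho> \<Gamma>')
  show ?case
  proof (intro allI impI)
    fix \<Gamma> :: "('v, 'b, 'g) ctx" and \<xi> A
    assume A: "finite A" and e\<Gamma>: "\<Gamma>' = cso \<xi> \<Gamma>" and p: "\<forall>\<alpha>. plain (\<xi> \<alpha>)" and cA: "csv \<Gamma> \<subseteq> A"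
    obtain n r0 where g: "D s = (n, r0)" by (cases "D s")
    have r0: "tsv r0 = {}" using decl[of s] g by (simp add: decl_ok_def psv_def)
    obtain bs where bs: "length bs = n" "\<forall>b\<in>set bs. plain b" "\<rho> = topen 0 bs r0"
      using hastype_fun(1) g by (auto simp: inst_def)
    obtain as where as: "length as = n" "distinct as" "set as \<inter> A = {}" using fresh_list[OF A] by blast
    obtain \<xi>a where xa: "map \<xi>a as = bs" "\<forall>\<alpha>. \<alpha> \<notin> set as \<longrightarrow> \<xi>a \<alpha> = \<xi> \<alpha>"
      using upd_list[of "as" bs \<xi>] as bs by auto
    have pa: "\<forall>\<alpha>. plain (\<xi>a \<alpha>)" using upd_plain[OF xa p bs(2)] .
    have pb: "\<forall>\<alpha>. bvs (\<xi>a \<alpha>) = {}" using pa by (simp add: plain_def)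
    have e: "tso \<xi>a (topen 0 (map SV as) r0) = \<rho>"
      using bs xa tso_nosv[OF r0] by (simp add: tso_topen[OF pb] comp_def)
    have i: "inferI D (set as) {} \<Gamma> (TSym s) (topen 0 (map SV as) r0)"
      using inferI_fun[where D=D and s=s and \<Gamma>=\<Gamma>, OF g as(1) as(2)] as(3) cA by blast
    have t: "tsv (topen 0 (map SV as) r0) \<subseteq> set as \<union> A"
      using tsv_topen[of 0 "map SV as" r0] r0 by auto
    have "good J (set as) {} \<xi> \<xi>a A" unfolding good_def using as(3) xa(2) pa by auto
    then show "\<exists>\<tau> S \<Phi> \<xi>'. tso \<xi>' \<tau> = \<rho> \<and> inferI D S \<Phi> \<Gamma> (TSym s) \<tau> \<and> tsv \<tau> \<subseteq> S \<union> A \<and> good J S \<Phi> \<xi> \<xi>' A"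
      using e i t by blast
  qed
next
  case (hastype_let \<Gamma>' t r1 r2 x1 x2 u \<rho>)
  show ?case
  proof (intro allI impI)
    fix \<Gamma> :: "('v, 'b, 'g) ctx" and \<xi> A
    assume A: "finite A" and e\<Gamma>: "\<Gamma>' = cso \<xi> \<Gamma>" and p: "\<forall>\<alpha>. plain (\<xi> \<alpha>)" and cA: "csv \<Gamma> \<subseteq> A"
    from hastype_let(2)[rule_format, OF A e\<Gamma> p[rule_format] cA] obtain \<tau>1 S1 \<Phi>1 \<xi>1 where
      h1: "tso \<xi>1 \<tau>1 = TP r1 r2" "inferI D S1 \<Phi>1 \<Gamma> t \<tau>1" "tsv \<tau>1 \<subseteq> S1 \<union> A" "good J S1 \<Phi>1 \<xi> \<xi>1 A"
      by blast
    obtain q1 q2 where q: "\<tau>1 = TP q1 q2" "tso \<xi>1 q1 = r1" "tso \<xi>1 q2 = r2" using h1(1) by (auto simp: tso_TP)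
    define \<Gamma>2 where "\<Gamma>2 = \<Gamma>(x1 \<mapsto> (0, q1), x2 \<mapsto> (0, q2))"
    have "cso \<xi>1 \<Gamma> = cso \<xi> \<Gamma>" using good_agree_ctx[OF h1(4) cA] .
    then have e2: "\<Gamma>'(x1 \<mapsto> (0, r1), x2 \<mapsto> (0, r2)) = cso \<xi>1 \<Gamma>2"
      unfolding \<Gamma>2_def by (simp only: cso_upd e\<Gamma> q)
    have qq: "tsv q1 \<union> tsv q2 \<subseteq> S1 \<union> A" using h1(3) q(1) by simp
    have cA2: "csv \<Gamma>2 \<subseteq> A \<union> S1"
      using csv_upd[of "\<Gamma>(x1 \<mapsto> (0, q1))" x2 0 q2] csv_upd[of \<Gamma> x1 0 q1] cA qq
      unfolding \<Gamma>2_def by blast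
    have fin: "finite (A \<union> S1)" using A good_finite[OF h1(4)] by simp
    from hastype_let(4)[rule_format, OF fin e2 good_plain[OF h1(4), rule_format] cA2] obtain \<tau> S2 \<Phi>2 \<xi>2 where
      h2: "tso \<xi>2 \<tau> = \<rho>" "inferI D S2 \<Phi>2 \<Gamma>2 u \<tau>" "tsv \<tau> \<subseteq> S2 \<union> (A \<union> S1)" "good J S2 \<Phi>2 \<xi>1 \<xi>2 (A \<union> S1)"
      by blast
    have gt: "good J (S1 \<union> S2) (\<Phi>1 \<union> \<Phi>2) \<xi> \<xi>2 A" "S1 \<inter> S2 = {}" using good_trans[OF h1(4) h2(4)] by auto
    have i: "inferI D (S1 \<union> S2) (\<Phi>1 \<union> \<Phi>2) \<Gamma> (TLet x1 x2 t u) \<tau>"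
      using inferI_let[OF h1(2)[unfolded q(1)] h2(2)[unfolded \<Gamma>2_def] gt(2)] .
    have "tsv \<tau> \<subseteq> (S1 \<union> S2) \<union> A" using h2(3) by blast
    then show "\<exists>\<tau> S \<Phi> \<xi>'. tso \<xi>' \<tau> = \<rho> \<and> inferI D S \<Phi> \<Gamma> (TLet x1 x2 t u) \<tau> \<and> tsv \<tau> \<subseteq> S \<union> A \<and> good J S \<Phi> \<xi> \<xi>' A"
      using h2(1) i gt(1) by blast
  qed
next
  case (hastype_pair \<Gamma>' t1 r1 t2 r2)
  show ?case
  proof (intro allI impI)
    fix \<Gamma> :: "('v, 'b, 'g) ctx" and \<xi> A
    assume A: "finite A" and e\<Gamma>: "\<Gamma>' = cso \<xi> \<Gamma>" and p: "\<forall>\<alpha>. plain (\<xi> \<alpha>)" and cA: "csv \<Gamma> \<subseteq> A"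
    from hastype_pair(2)[rule_format, OF A e\<Gamma> p[rule_format] cA] obtain \<tau>1 S1 \<Phi>1 \<xi>1 where
      h1: "tso \<xi>1 \<tau>1 = r1" "inferI D S1 \<Phi>1 \<Gamma> t1 \<tau>1" "tsv \<tau>1 \<subseteq> S1 \<union> A" "good J S1 \<Phi>1 \<xi> \<xi>1 A"
      by blast
    have "cso \<xi>1 \<Gamma> = cso \<xi> \<Gamma>" using good_agree_ctx[OF h1(4) cA] .
    then have e2: "\<Gamma>' = cso \<xi>1 \<Gamma>" using e\<Gamma> by simp
    have cA2: "csv \<Gamma> \<subseteq> A \<union> S1" using cA by blast
    have fin: "finite (A \<union> S1)" using A good_finite[OF h1(4)] by simp
    from hastype_pair(4)[rule_format, OF fin e2 good_plain[OF h1(4), rule_format] cA2] obtain \<tau>2 S2 \<Phi>2 \<xi>2 where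
      h2: "tso \<xi>2 \<tau>2 = r2" "inferI D S2 \<Phi>2 \<Gamma> t2 \<tau>2" "tsv \<tau>2 \<subseteq> S2 \<union> (A \<union> S1)" "good J S2 \<Phi>2 \<xi>1 \<xi>2 (A \<union> S1)"
      by blast
    have gt: "good J (S1 \<union> S2) (\<Phi>1 \<union> \<Phi>2) \<xi> \<xi>2 A" "S1 \<inter> S2 = {}" using good_trans[OF h1(4) h2(4)] by auto
    have "tsv \<tau>1 \<subseteq> A \<union> S1" using h1(3) by blast
    then have e1: "tso \<xi>2 \<tau>1 = r1" using good_agree[OF h2(4), of \<tau>1] h1(1) by simp
    have i: "inferI D (S1 \<union> S2) (\<Phi>1 \<union> \<Phi>2) \<Gamma> (TPair t1 t2) (TP \<tau>1 \<tau>2)"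
      using inferI_pair[OF h1(2) h2(2) gt(2)] .
    have "tsv (TP \<tau>1 \<tau>2) \<subseteq> (S1 \<union> S2) \<union> A" using h1(3) h2(3) by auto
    then show "\<exists>\<tau> S \<Phi> \<xi>'. tso \<xi>' \<tau> = TP r1 r2 \<and> inferI D S \<Phi> \<Gamma> (TPair t1 t2) \<tau> \<and> tsv \<tau> \<subseteq> S \<union> A \<and> good J S \<Phi> \<xi> \<xi>' A"
      using h2(1) e1 i gt(1) by (intro exI[of _ "TP \<tau>1 \<tau>2"]) auto
  qed
next
  case (hastype_app \<Gamma>' t n t1 \<rho> u t2 "is")
  show ?case
  proof (intro allI impI)
    fix \<Gamma> :: "('v, 'b, 'g) ctx" and \<xi> A
    assume A: "finite A" and e\<Gamma>: "\<Gamma>' = cso \<xi> \<Gamma>" and p: "\<forall>\<alpha>. plain (\<xi> \<alpha>)" and cA: "csv \<Gamma> \<subseteq> A"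
    from hastype_app(2)[rule_format, OF A e\<Gamma> p[rule_format] cA] obtain \<tau>t S1 \<Phi>1 \<xi>1 where
      h1: "tso \<xi>1 \<tau>t = TA n t1 \<rho>" "inferI D S1 \<Phi>1 \<Gamma> t \<tau>t" "tsv \<tau>t \<subseteq> S1 \<union> A" "good J S1 \<Phi>1 \<xi> \<xi>1 A"
      by blast
    obtain q1 q where q: "\<tau>t = TA n q1 q" "tso \<xi>1 q1 = t1" "tso \<xi>1 q = \<rho>" using h1(1) by (auto simp: tso_TA)
    have "cso \<xi>1 \<Gamma> = cso \<xi> \<Gamma>" using good_agree_ctx[OF h1(4) cA] .
    then have e2: "\<Gamma>' = cso \<xi>1 \<Gamma>" using e\<Gamma> by simp
    have cA2: "csv \<Gamma> \<subseteq> A \<union> S1" using cA by blast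
    have fin: "finite (A \<union> S1)" using A good_finite[OF h1(4)] by simp
    from hastype_app(4)[rule_format, OF fin e2 good_plain[OF h1(4), rule_format] cA2] obtain \<tau>2 S2 \<Phi>2 \<xi>2 where
      h2: "tso \<xi>2 \<tau>2 = t2" "inferI D S2 \<Phi>2 \<Gamma> u \<tau>2" "tsv \<tau>2 \<subseteq> S2 \<union> (A \<union> S1)" "good J S2 \<Phi>2 \<xi>1 \<xi>2 (A \<union> S1)"
      by blast
    have q1A: "tsv q1 \<subseteq> A \<union> S1" "tsv q \<subseteq> A \<union> S1" using h1(3) q(1) by auto
    have eq1: "tso \<xi>2 q1 = t1" using good_agree[OF h2(4) q1A(1)] q(2) by simp
    have pl2: "\<forall>\<alpha>. plain (\<xi>2 \<alpha>)" using good_plain[OF h2(4)] .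
    have pb2: "\<forall>\<alpha>. bvs (\<xi>2 \<alpha>) = {}" using pl2 by (simp add: plain_def)
    have hs: "sub J (tso \<xi>2 \<tau>2) (tso \<xi>2 (topen 0 (map IV is) q1))"
      using hastype_app(5) h2(1) eq1 by (simp add: tso_topen[OF pb2] comp_def)
    have fin3: "finite (A \<union> S1 \<union> S2)" using fin good_finite[OF h2(4)] by simp
    have tt: "tsv \<tau>2 \<union> tsv (topen 0 (map IV is) q1) \<subseteq> A \<union> S1 \<union> S2"
      using h2(3) q1A(1) tsv_topen[of 0 "map IV is" q1] by auto
    from sub_complete(1)[OF hs, rule_format, OF fin3 refl refl pl2[rule_format] tt]
    obtain S3 \<Phi>3 \<xi>3 where h3: "subI S3 \<Phi>3 \<tau>2 (topen 0 (map IV is) q1)" "good J S3 \<Phi>3 \<xi>2 \<xi>3 (A \<union> S1 \<union> S2)"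
      by blast
    have g23: "good J (S2 \<union> S3) (\<Phi>2 \<union> \<Phi>3) \<xi>1 \<xi>3 (A \<union> S1)" "S2 \<inter> S3 = {}"
      using good_trans[OF h2(4) h3(2)] by auto
    have g123: "good J (S1 \<union> (S2 \<union> S3)) (\<Phi>1 \<union> (\<Phi>2 \<union> \<Phi>3)) \<xi> \<xi>3 A" "S1 \<inter> (S2 \<union> S3) = {}"
      using good_trans[OF h1(4) g23(1)] by auto
    have d3: "S3 \<inter> (A \<union> S1 \<union> S2) = {}" using good_disj[OF h3(2)] .
    have ag3: "\<forall>\<alpha>\<in>A \<union> S1. \<xi>3 \<alpha> = \<xi>1 \<alpha>"
    proof
      fix \<alpha> assume "\<alpha> \<in> A \<union> S1"
      then have "\<alpha> \<notin> S2 \<union> S3" using g23 good_disj[OF g23(1)] by blast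
      then show "\<xi>3 \<alpha> = \<xi>1 \<alpha>" using g23(1) unfolding good_def by simp
    qed
    have ag: "\<forall>\<alpha>\<in>A. \<xi>3 \<alpha> = \<xi> \<alpha>"
    proof
      fix \<alpha> assume "\<alpha> \<in> A"
      then have "\<alpha> \<notin> S1 \<union> (S2 \<union> S3)" using good_disj[OF g123(1)] by blast
      then show "\<xi>3 \<alpha> = \<xi> \<alpha>" using g123(1) unfolding good_def by simp
    qed
    have cfvsub: "cfv (\<Gamma> |` fvt u) \<subseteq> cfv (\<Gamma>' |` fvt u)" and
      ivsub: "\<forall>\<alpha>\<in>csv (\<Gamma> |` fvt u). ivs (\<xi> \<alpha>) \<subseteq> cfv (\<Gamma>' |` fvt u)"
      using cfv_cso[of \<xi> "\<Gamma> |` fvt u"] unfolding e\<Gamma> cso_restrict by auto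
    have csvu: "csv (\<Gamma> |` fvt u) \<subseteq> A" using csv_restrict cA by blast
    have tfvq1: "tfv q1 \<subseteq> tfv t1" "\<forall>\<alpha>\<in>tsv q1. ivs (\<xi>1 \<alpha>) \<subseteq> tfv t1"
      using q(2) by (auto simp: tfv_tso)
    have N1: "\<forall>c\<in>notin is (tsv q1). sat J \<xi>3 c \<and> csvs c \<subseteq> (S1 \<union> (S2 \<union> S3)) \<union> A"
    proof
      fix c :: "'g con" assume "c \<in> notin is (tsv q1)"
      then obtain i \<alpha> where c: "c = CNotIn i \<alpha>" "i \<in> set is" "\<alpha> \<in> tsv q1"
        unfolding notin_def by blast
      have a: "\<alpha> \<in> A \<union> S1" using c q1A by blast
      have "i \<notin> ivs (\<xi>1 \<alpha>)" using hastype_app(8) tfvq1(2) c by blast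
      then show "sat J \<xi>3 c \<and> csvs c \<subseteq> (S1 \<union> (S2 \<union> S3)) \<union> A" using a c ag3 by auto
    qed
    have N2: "\<forall>c\<in>notin is (csv (\<Gamma> |` fvt u)). sat J \<xi>3 c \<and> csvs c \<subseteq> (S1 \<union> (S2 \<union> S3)) \<union> A"
    proof
      fix c :: "'g con" assume "c \<in> notin is (csv (\<Gamma> |` fvt u))"
      then obtain i \<alpha> where c: "c = CNotIn i \<alpha>" "i \<in> set is" "\<alpha> \<in> csv (\<Gamma> |` fvt u)"
        unfolding notin_def by blast
      have a: "\<alpha> \<in> A" using c csvu by blast
      have "i \<notin> ivs (\<xi> \<alpha>)" using hastype_app(8) ivsub c by blast
      then show "sat J \<xi>3 c \<and> csvs c \<subseteq> (S1 \<union> (S2 \<union> S3)) \<union> A" using a c ag by auto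
    qed
    have gall: "good J (S1 \<union> (S2 \<union> S3)) (\<Phi>1 \<union> (\<Phi>2 \<union> \<Phi>3) \<union> notin is (tsv q1) \<union> notin is (csv (\<Gamma> |` fvt u))) \<xi> \<xi>3 A"
      using good_add[OF good_add[OF g123(1) N1] N2] .
    have gall': "good J (S1 \<union> S2 \<union> S3) (\<Phi>1 \<union> \<Phi>2 \<union> \<Phi>3 \<union> notin is (tsv q1) \<union> notin is (csv (\<Gamma> |` fvt u))) \<xi> \<xi>3 A"
      using gall by (simp add: Un_assoc)
    have dis: "set is \<inter> (tfv q1 \<union> cfv (\<Gamma> |` fvt u)) = {}" using hastype_app(8) tfvq1(1) cfvsub by blast
    have S13: "S1 \<inter> S3 = {}" "S1 \<inter> S2 = {}" using g123(2) by auto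
    have S3c: "S3 \<inter> csv \<Gamma> = {}" using d3 cA by blast
    have i: "inferI D (S1 \<union> S2 \<union> S3) (\<Phi>1 \<union> \<Phi>2 \<union> \<Phi>3 \<union> notin is (tsv q1) \<union> notin is (csv (\<Gamma> |` fvt u))) \<Gamma> (TApp t u) q"
      using inferI_app[OF h1(2)[unfolded q(1)] h2(2) h3(1) hastype_app(6) hastype_app(7) dis S13(2) S13(1) g23(2) S3c] .
    have eq: "tso \<xi>3 q = \<rho>" using tso_cong[of q \<xi>3 \<xi>1] ag3 q1A(2) q(3) by blast
    have "tsv q \<subseteq> (S1 \<union> S2 \<union> S3) \<union> A" using q1A(2) by blast
    then show "\<exists>\<tau> S \<Phi> \<xi>'. tso \<xi>' \<tau> = \<rho> \<and> inferI D S \<Phi> \<Gamma> (TApp t u) \<tau> \<and> tsv \<tau> \<subseteq> S \<union> A \<and> good J S \<Phi> \<xi> \<xi>' A"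
      using eq i gall' by blast
  qed
qed


lemma cso_nosv: "csv \<Gamma> = {} \<Longrightarrow> cso \<xi> \<Gamma> = \<Gamma>"
proof
  fix x assume c: "csv \<Gamma> = {}"
  show "cso \<xi> \<Gamma> x = \<Gamma> x"
  proof (cases "\<Gamma> x")
    case None then show ?thesis by (simp add: cso_def)
  next
    case (Some p)
    obtain n r where p: "p = (n, r)" by (cases p)
    have "tsv r = {}" using csv_Some[of \<Gamma> x n r] Some p c by auto
    then show ?thesis using Some p by (simp add: cso_def pso_def tso_nosv)
  qed
qed

theorem mainTheorem13:
  fixes D :: "'f \<Rightarrow> ('b, 'g) poly"
  assumes decl: "\<And>s. decl_ok (D s)"
  shows "(\<forall>S \<Phi> (\<Gamma> :: ('v, 'b, 'g) ctx) (t :: ('v, 'f) trm) \<rho> J \<xi>.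
            ctx_ok \<Gamma> \<and> inferI D S \<Phi> \<Gamma> t \<rho> \<and> model J \<xi> \<Phi> \<longrightarrow>
            hastype J D (cso \<xi> \<Gamma>) t (tso \<xi> \<rho>))
       \<and> (\<forall>J (\<Gamma> :: ('v, 'b, 'g) ctx) (t :: ('v, 'f) trm) \<rho>.
            is_interp J \<and> ctx_ok \<Gamma> \<and> csv \<Gamma> = {} \<and> mono_ok \<rho> \<and> tsv \<rho> = {} \<and>
            hastype J D \<Gamma> t \<rho> \<longrightarrow>
            (\<exists>\<tau> \<xi> \<Phi> S. tso \<xi> \<tau> = \<rho> \<and> inferI D S \<Phi> \<Gamma> t \<tau> \<and> model J \<xi> \<Phi>))"
  proof (intro conjI allI impI)
  fix S \<Phi> and \<Gamma> :: "('v, 'b, 'g) ctx" and t :: "('v, 'f) trm" and \<rho> J \<xi>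
  assume "ctx_ok \<Gamma> \<and> inferI D S \<Phi> \<Gamma> t \<rho> \<and> model J \<xi> \<Phi>"
  then show "hastype J D (cso \<xi> \<Gamma>) t (tso \<xi> \<rho>)" using inferI_sound[where D=D, OF decl] by blast
next
  fix J and \<Gamma> :: "('v, 'b, 'g) ctx" and t :: "('v, 'f) trm" and \<rho>
  assume h: "is_interp J \<and> ctx_ok \<Gamma> \<and> csv \<Gamma> = {} \<and> mono_ok \<rho> \<and> tsv \<rho> = {} \<and> hastype J D \<Gamma> t \<rho>"
  define \<xi>0 where "\<xi>0 = (\<lambda>_::nat. (IZ :: 'g idx))"
  have p0: "\<And>\<alpha>. plain (\<xi>0 \<alpha>)" by (simp add: \<xi>0_def plain_def)
  have e: "\<Gamma> = cso \<xi>0 \<Gamma>" using cso_nosv h by metis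
  have c: "csv \<Gamma> \<subseteq> {}" using h by simp
  from hastype_complete[where D=D, OF decl, of J \<Gamma> t \<rho>, rule_format, OF _ finite.emptyI e p0 c] h
  obtain \<tau> S \<Phi> \<xi>' where r: "tso \<xi>' \<tau> = \<rho>" "inferI D S \<Phi> \<Gamma> t \<tau>" "good J S \<Phi> \<xi>0 \<xi>' {}"
    by blast
  have "model J \<xi>' \<Phi>" using r(3) h unfolding good_def model_def by blast
  then show "\<exists>\<tau> \<xi> \<Phi> S. tso \<xi> \<tau> = \<rho> \<and> inferI D S \<Phi> \<Gamma> t \<tau> \<and> model J \<xi> \<Phi>" using r by blast
qed

end
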